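(* Let $A\in\mathbb{R}^{m\times n}$ with $m>n$ and $\mathrm{rank}(A)=n$, $b\in\mathrm{range}(A)$, $c\in\mathbb{R}^n$, and consider the linear program $\min_{x\in\mathbb{R}^n}\{c^\top x: Ax=b\}$, whose unique feasible (hence optimal) point is $x^*=(A^\top A)^{-1}A^\top b$. Let $\eta>0$, $t_0=1$, $y_0=0$, $\lambda_0\in\mathbb{R}^m$ arbitrary, and for $k\ge0$: $$x_{k+1}=\arg\min_{x\in\mathbb{R}^n}\{c^\top x+y_k^\top(Ax-b)+\tfrac\eta2\|Ax-b\|_2^2\}=(A^\top A)^{-1}\big(A^\top b-\tfrac1\eta(A^\top y_k+c)\big),$$ $$\lambda_{k+1}=y_k+\eta(Ax_{k+1}-b),\quad t_{k+1}=\tfrac{1+\sqrt{1+4t_k^2}}{2},\quad y_{k+1}=\lambda_{k+1}+\tfrac{t_k-1}{t_{k+1}}(\lambda_{k+1}-\lambda_k)+\tfrac{t_k}{t_{k+1}}(\lambda_{k+1}-y_k).$$ Then for every $k\ge1$, $\lambda_k$ is an optimal solution of the dual problem $\max\{-b^\top\lambda: A^\top\lambda+c=0\}$, and for every $T\ge1$, $$x_T=x^*-\frac{(-1)^{T-1}}{\eta\,t_{T-1}}(A^\top A)^{-1}c,$$ so that $$|c^\top(x^*-x_T)|=\frac{c^\top(A^\top A)^{-1}c}{\eta\,t_{T-1}},\qquad\|Ax_T-b\|=\frac{\|A(A^\top A)^{-1}c\|}{\eta\,t_{T-1}},$$ for any norm $\|\cdot\|$, where $\frac{T}{2}\le t_{T-1}\le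 T$. In particular, when $c\neq0$ both the primal optimality gap and the feasibility violation are of exact order $1/T$. *)

theory Defs
  imports "HOL-Analysis.Analysis" "HOL-Library.Landau_Symbols"
begin

text \<open>A norm on a real vector space, in the usual axiomatic sense
  (used to express "for any norm").\<close>
definition is_norm :: "('a::real_vector \<Rightarrow> real) \<Rightarrow> bool" where
  "is_norm N \<longleftrightarrow>
     (\<forall>x. 0 \<le> N x) \<and> (\<forall>x. N x = 0 \<longleftrightarrow> x = 0) \<and>
     (\<forall>a x. N (a *\<^sub>R x) = \<bar>a\<bar> * N x) \<and> (\<forall>x y. N (x + y) \<le> N x + N y)"

definition dual_optimal ::
  "real^'n^'m \<Rightarrow> real^'m \<Rightarrow> real^'n \<Rightarrow> real^'m \<Rightarrow> bool" where
  "dual_optimal A b c lam \<longleftrightarrow>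
     transpose A *v lam + c = 0 \<and>
     (\<forall>mu. transpose A *v mu + c = 0 \<longrightarrow> - (b \<bullet> mu) \<le> - (b \<bullet> lam))"

definition aug_lag ::
  "real^'n^'m \<Rightarrow> real^'m \<Rightarrow> real^'n \<Rightarrow> real \<Rightarrow> real^'m \<Rightarrow> real^'n \<Rightarrow> real" where
  "aug_lag A b c \<eta> y x = c \<bullet> x + y \<bullet> (A *v x - b) + \<eta> / 2 * (norm (A *v x - b))\<^sup>2"

end

theory Submission
  imports Defs
begin

lemma theta_aux:
  fixes f s :: "nat \<Rightarrow> real"
  assumes K: "K > 0" and e: "\<eta> > 0" and f: "\<forall>T\<ge>1. f T = K / (\<eta> * s T)"
    and s: "\<forall>T\<ge>1. real T / 2 \<le> s T \<and> s T \<le> real T"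
  shows "f \<in> \<Theta>(\<lambda>T. 1 / real T)"
proof
  have ev: "eventually (\<lambda>T::nat. T \<ge> 1) at_top" by (simp add: eventually_ge_at_top)
  show "f \<in> O(\<lambda>T. 1 / real T)"
  proof (rule landau_o.bigI[of "2*K/\<eta>"])
    show "2*K/\<eta> > 0" using K e by simp
    show "\<forall>\<^sub>F T in at_top. norm (f T) \<le> 2 * K / \<eta> * norm (1 / real T)"
      using ev
    proof eventually_elim
      case (elim T)
      then have sT: "real T / 2 \<le> s T" "s T > 0" using s by force+
      have "norm (f T) = K / (\<eta> * s T)" using f elim K e sT by simp
      also have "\<dots> \<le> K / (\<eta> * (real T / 2))"
        using K e sT elim by (intro divide_left_mono mult_left_mono) auto
      also have "\<dots> = 2 * K / \<eta> * norm (1 / real T)" using elim by simp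
      finally show ?case .
    qed
  qed
  show "f \<in> \<Omega>(\<lambda>T. 1 / real T)"
  proof (rule landau_omega.bigI[of "K/\<eta>"])
    show "K/\<eta> > 0" using K e by simp
    show "\<forall>\<^sub>F T in at_top. norm (f T) \<ge> K / \<eta> * norm (1 / real T)"
      using ev
    proof eventually_elim
      case (elim T)
      then have sT: "s T \<le> real T" "s T > 0" using s by force+
      have "K / \<eta> * norm (1 / real T) = K / (\<eta> * real T)" using elim by simp
      also have "\<dots> \<le> K / (\<eta> * s T)"
        using K e sT elim by (intro divide_left_mono mult_left_mono mult_pos_pos) auto
      also have "\<dots> = norm (f T)" using f elim K e sT by simp
      finally show ?case .
    qed
  qed
qed

lemma adj: fixes A :: "real^'n^'m"
  shows "(transpose A *v v) \<bullet> d = v \<bullet> (A *v d)"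
  by (simp add: dot_lmul_matrix)

lemma gram_inv:
  fixes A :: "real^'n^'m"
  assumes inj: "inj ((*v) A)"
  shows "matrix_inv (transpose A ** A) ** (transpose A ** A) = mat 1"
    "(transpose A ** A) ** matrix_inv (transpose A ** A) = mat 1"
proof -
  let ?G = "transpose A ** A"
  have "inj ((*v) ?G)"
  proof (rule injI)
    fix u v assume "?G *v u = ?G *v v"
    then have "?G *v (u - v) = 0" by (simp add: matrix_vector_mult_diff_distrib)
    then have "(transpose A *v (A *v (u - v))) \<bullet> (u - v) = 0"
      by (simp add: matrix_vector_mul_assoc del: transpose_matrix_vector)
    then have "(A *v (u - v)) \<bullet> (A *v (u - v)) = 0" by (simp only: adj)
    then have "A *v u = A *v v" by (simp add: matrix_vector_mult_diff_distrib)
    then show "u = v" using inj by (simp add: inj_eq)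
  qed
  then have "invertible ?G"
    using matrix_left_invertible_injective invertible_left_inverse by blast
  then have "?G ** matrix_inv ?G = mat 1 \<and> matrix_inv ?G ** ?G = mat 1"
    unfolding invertible_def matrix_inv_def by (rule someI_ex)
  then show "matrix_inv ?G ** ?G = mat 1" "?G ** matrix_inv ?G = mat 1" by auto
qed


theorem mainTheorem13:
  fixes A :: "real^'n^'m" and b :: "real^'m" and c :: "real^'n" and \<eta> :: real
    and x :: "nat \<Rightarrow> real^'n" and lam y :: "nat \<Rightarrow> real^'m" and t :: "nat \<Rightarrow> real"
  assumes mn: "CARD('m) > CARD('n)"
    and rk: "rank A = CARD('n)"
    and b_range: "b \<in> range (\<lambda>z. A *v z)"
    and eta_pos: "\<eta> > 0"
    and t0: "t 0 = 1"
    and y0: "y 0 = 0"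
    and x_upd: "\<And>k z. aug_lag A b c \<eta> (y k) (x (Suc k)) \<le> aug_lag A b c \<eta> (y k) z"
    and lam_upd: "\<And>k. lam (Suc k) = y k + \<eta> *\<^sub>R (A *v x (Suc k) - b)"
    and t_upd: "\<And>k. t (Suc k) = (1 + sqrt (1 + 4 * (t k)\<^sup>2)) / 2"
    and y_upd: "\<And>k. y (Suc k) = lam (Suc k)
                  + ((t k - 1) / t (Suc k)) *\<^sub>R (lam (Suc k) - lam k)
                  + (t k / t (Suc k)) *\<^sub>R (lam (Suc k) - y k)"
  defines "M \<equiv> matrix_inv (transpose A ** A)"
  defines "xstar \<equiv> M *v (transpose A *v b)"
  shows "(\<forall>z. A *v z = b \<longleftrightarrow> z = xstar)
    \<and> (\<forall>k\<ge>1. dual_optimal A b c (lam k))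
    \<and> (\<forall>T\<ge>1. x T = xstar - ((-1) ^ (T - 1) / (\<eta> * t (T - 1))) *\<^sub>R (M *v c))
    \<and> (\<forall>T\<ge>1. \<bar>c \<bullet> (xstar - x T)\<bar> = (c \<bullet> (M *v c)) / (\<eta> * t (T - 1)))
    \<and> (\<forall>T\<ge>1. \<forall>N::real^'m \<Rightarrow> real. is_norm N \<longrightarrow>
          N (A *v x T - b) = N (A *v (M *v c)) / (\<eta> * t (T - 1)))
    \<and> (\<forall>T\<ge>1. real T / 2 \<le> t (T - 1) \<and> t (T - 1) \<le> real T)
    \<and> (c \<noteq> 0 \<longrightarrow>
          (\<lambda>T. \<bar>c \<bullet> (xstar - x T)\<bar>) \<in> \<Theta>(\<lambda>T. 1 / real T) \<and>
          (\<lambda>T. norm (A *v x T - b)) \<in> \<Theta>(\<lambda>T. 1 / real T))"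
proof -
  let ?G = "transpose A ** A"
  have inj: "inj ((*v) A)" using rk full_rank_injective by blast
  have MG: "M ** ?G = mat 1" and GM: "?G ** M = mat 1"
    using gram_inv[OF inj] unfolding M_def by auto
  obtain z0 where z0: "b = A *v z0" using b_range by auto
  have xs: "xstar = z0"
    unfolding xstar_def z0 by (simp add: matrix_vector_mul_assoc MG del: transpose_matrix_vector)
  have P1: "\<forall>z. A *v z = b \<longleftrightarrow> z = xstar"
    using inj unfolding xs z0 by (auto simp: inj_eq)
  have bx: "b = A *v xstar" using xs z0 by simp
  have GMv: "transpose A *v (A *v (M *v v)) = v" for v
    by (metis matrix_vector_mul_assoc matrix_mul_assoc GM matrix_vector_mul_lid)
  define u where "u k = transpose A *v y k + c" for k
  have xk: "x (Suc k) = xstar - (1/\<eta>) *\<^sub>R (M *v u k)" for k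
  proof -
    define x0 where "x0 = xstar - (1/\<eta>) *\<^sub>R (M *v u k)"
    define f where "f = aug_lag A b c \<eta> (y k)"
    have r: "A *v x0 - b = - (1/\<eta>) *\<^sub>R (A *v (M *v u k))"
      unfolding x0_def bx by (simp add: algebra_simps)
    have exp: "f (x0 + d) = f x0 + \<eta>/2 * (norm (A *v d))\<^sup>2" for d
    proof -
      define r where "r = A *v x0 - b"
      define e where "e = A *v d"
      have e1: "A *v (x0 + d) - b = r + e" unfolding r_def e_def by (simp add: algebra_simps)
      have sq: "(norm (r + e))\<^sup>2 = (norm r)\<^sup>2 + 2 * (r \<bullet> e) + (norm e)\<^sup>2"
        by (simp add: power2_norm_eq_inner algebra_simps inner_commute)
      have re: "r \<bullet> e = - (1/\<eta>) * (u k \<bullet> d)"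
      proof -
        have "r \<bullet> e = (transpose A *v (A *v x0 - b)) \<bullet> d" unfolding r_def e_def by (simp only: adj)
        also have "transpose A *v (A *v x0 - b) = (- (1/\<eta>)) *\<^sub>R u k"
          unfolding r scaleR_minus_left[symmetric] matrix_vector_mult_scaleR GMv by simp
        finally show ?thesis by simp
      qed
      have ye: "y k \<bullet> e = (transpose A *v y k) \<bullet> d" unfolding e_def by (simp only: adj)
      have ud: "u k \<bullet> d = (transpose A *v y k) \<bullet> d + c \<bullet> d"
        unfolding u_def by (simp add: inner_add_left)
      have lin: "\<eta> * (r \<bullet> e) = - (c \<bullet> d) - y k \<bullet> e"
        unfolding re ye ud using eta_pos by (simp add: field_simps)
      have "f (x0 + d) = c \<bullet> x0 + c \<bullet> d + (y k \<bullet> r + y k \<bullet> e) + \<eta>/2 * ((norm r)\<^sup>2 + 2 * (r \<bullet> e) + (norm e)\<^sup>2)"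
        unfolding f_def aug_lag_def e1 sq by (simp add: inner_add_right)
      also have "\<dots> = c \<bullet> x0 + y k \<bullet> r + \<eta>/2 * (norm r)\<^sup>2 + \<eta>/2 * (norm e)\<^sup>2
          + (c \<bullet> d + y k \<bullet> e + \<eta> * (r \<bullet> e))"
        by (simp add: algebra_simps)
      also have "\<dots> = f x0 + \<eta>/2 * (norm e)\<^sup>2"
        unfolding lin f_def aug_lag_def r_def[symmetric] by simp
      finally show ?thesis unfolding e_def .
    qed
    have "f (x (Suc k)) \<le> f x0" unfolding f_def by (rule x_upd)
    also have "f (x (Suc k)) = f x0 + \<eta>/2 * (norm (A *v (x (Suc k) - x0)))\<^sup>2"
      using exp[of "x (Suc k) - x0"] by simp
    finally have "(norm (A *v (x (Suc k) - x0)))\<^sup>2 \<le> 0" using eta_pos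
      by (simp add: mult_le_0_iff)
    then have "A *v (x (Suc k)) = A *v x0" by (simp add: matrix_vector_mult_diff_distrib)
    then show ?thesis using inj unfolding x0_def by (simp add: inj_eq)
  qed
  have lamA: "transpose A *v lam (Suc k) + c = 0" for k
  proof -
    have "transpose A *v lam (Suc k) = transpose A *v y k + \<eta> *\<^sub>R (transpose A *v (A *v x (Suc k)) - transpose A *v b)"
      unfolding lam_upd by (simp add: algebra_simps del: transpose_matrix_vector)
    also have "transpose A *v (A *v x (Suc k)) = transpose A *v b - (1/\<eta>) *\<^sub>R u k"
      unfolding xk bx by (simp add: algebra_simps GMv del: transpose_matrix_vector)
    finally show ?thesis using eta_pos unfolding u_def by (simp add: algebra_simps del: transpose_matrix_vector)
  qed
  have tpos: "t k \<ge> 1" for k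
  proof (induction k)
    case 0 then show ?case using t0 by simp
  next
    case (Suc k)
    have "sqrt (1 + 4 * (t k)\<^sup>2) \<ge> 1" by simp
    then show ?case unfolding t_upd by simp
  qed
  have tbd: "t k + 1/2 \<le> t (Suc k) \<and> t (Suc k) \<le> t k + 1" for k
  proof -
    have a: "sqrt (1 + 4 * (t k)\<^sup>2) \<ge> 2 * t k"
      by (rule real_le_rsqrt) (simp add: power2_eq_square)
    have "sqrt (1 + 4 * (t k)\<^sup>2) \<le> 1 + 2 * t k" using tpos[of k]
      by (intro real_le_lsqrt) (simp_all add: power2_eq_square algebra_simps)
    with a show ?thesis unfolding t_upd by simp
  qed
  have uS: "u (Suc k) = - (t k / t (Suc k)) *\<^sub>R u k" for k
  proof -
    have lk: "(t k - 1) *\<^sub>R (transpose A *v lam (Suc k) - transpose A *v lam k) = 0"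
    proof (cases k)
      case 0 then show ?thesis using t0 by simp
    next
      case (Suc j) then show ?thesis using lamA[of j] lamA[of k]
        by (metis add.commute add_diff_cancel_left' diff_self scale_zero_right)
    qed
    have "u (Suc k) = (transpose A *v lam (Suc k) + c)
        + ((t k - 1) / t (Suc k)) *\<^sub>R (transpose A *v lam (Suc k) - transpose A *v lam k)
        + (t k / t (Suc k)) *\<^sub>R (transpose A *v lam (Suc k) - transpose A *v y k)"
      unfolding u_def y_upd by (simp add: algebra_simps del: transpose_matrix_vector)
    also have "((t k - 1) / t (Suc k)) *\<^sub>R (transpose A *v lam (Suc k) - transpose A *v lam k) = 0"
      using lk by (auto simp: divide_inverse)
    also have "transpose A *v lam (Suc k) = - c" using lamA[of k] by (simp add: eq_neg_iff_add_eq_0 del: transpose_matrix_vector)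
    finally show ?thesis unfolding u_def by (simp add: algebra_simps del: transpose_matrix_vector)
  qed
  have uk: "u k = ((-1)^k / t k) *\<^sub>R c" for k
  proof (induction k)
    case 0 then show ?case unfolding u_def using y0 t0 by (simp del: transpose_matrix_vector)
  next
    case (Suc k)
    have "t k > 0" "t (Suc k) > 0" using tpos[of k] tpos[of "Suc k"] by auto
    then show ?case unfolding uS Suc by (simp add: field_simps)
  qed
  have P3: "\<forall>T\<ge>1. x T = xstar - ((-1) ^ (T - 1) / (\<eta> * t (T - 1))) *\<^sub>R (M *v c)"
  proof (intro allI impI)
    fix T :: nat assume "T \<ge> 1"
    then obtain k where T: "T = Suc k" by (cases T) auto
    show "x T = xstar - ((-1) ^ (T - 1) / (\<eta> * t (T - 1))) *\<^sub>R (M *v c)"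
      unfolding T xk uk by (simp add: algebra_simps)
  qed
  have cMc: "c \<bullet> (M *v c) = (norm (A *v (M *v c)))\<^sup>2"
  proof -
    have "c = transpose A *v (A *v (M *v c))" by (simp only: GMv)
    then have "c \<bullet> (M *v c) = (transpose A *v (A *v (M *v c))) \<bullet> (M *v c)" by simp
    also have "\<dots> = (A *v (M *v c)) \<bullet> (A *v (M *v c))" by (simp only: adj)
    finally show ?thesis by (simp add: power2_norm_eq_inner)
  qed
  have P4: "\<forall>T\<ge>1. \<bar>c \<bullet> (xstar - x T)\<bar> = (c \<bullet> (M *v c)) / (\<eta> * t (T - 1))"
  proof (intro allI impI)
    fix T :: nat assume "T \<ge> 1"
    have tp: "t (T - 1) > 0" using tpos[of "T-1"] by simp
    have "\<bar>c \<bullet> (xstar - x T)\<bar> = \<bar>(-1) ^ (T - 1) / (\<eta> * t (T - 1))\<bar> * \<bar>c \<bullet> (M *v c)\<bar>"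
      using P3 \<open>T \<ge> 1\<close> by (simp add: abs_mult)
    also have "\<dots> = (c \<bullet> (M *v c)) / (\<eta> * t (T - 1))"
      using tp eta_pos unfolding cMc by (simp add: abs_mult power_abs)
    finally show "\<bar>c \<bullet> (xstar - x T)\<bar> = (c \<bullet> (M *v c)) / (\<eta> * t (T - 1))" .
  qed
  have P5: "\<forall>T\<ge>1. \<forall>N::real^'m \<Rightarrow> real. is_norm N \<longrightarrow>
          N (A *v x T - b) = N (A *v (M *v c)) / (\<eta> * t (T - 1))"
  proof (intro allI impI)
    fix T :: nat and N :: "real^'m \<Rightarrow> real" assume "T \<ge> 1" "is_norm N"
    have tp: "t (T - 1) > 0" using tpos[of "T-1"] by simp
    have xT: "x T = xstar - ((-1) ^ (T - 1) / (\<eta> * t (T - 1))) *\<^sub>R (M *v c)"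
      using P3 \<open>T \<ge> 1\<close> by blast
    have hom: "\<And>a v. N (a *\<^sub>R v) = \<bar>a\<bar> * N v" using \<open>is_norm N\<close> unfolding is_norm_def by blast
    have eqv: "A *v x T - b = (- ((-1) ^ (T - 1) / (\<eta> * t (T - 1)))) *\<^sub>R (A *v (M *v c))"
      unfolding xT bx by (simp add: algebra_simps)
    have "N (A *v x T - b) = \<bar>- ((-1) ^ (T - 1) / (\<eta> * t (T - 1)))\<bar> * N (A *v (M *v c))"
      unfolding eqv by (rule hom)
    also have "\<dots> = N (A *v (M *v c)) / (\<eta> * t (T - 1))"
      using tp eta_pos by (simp add: abs_mult power_abs)
    finally show "N (A *v x T - b) = N (A *v (M *v c)) / (\<eta> * t (T - 1))" .
  qed
  have P6: "\<forall>T\<ge>1. real T / 2 \<le> t (T - 1) \<and> t (T - 1) \<le> real T"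
  proof -
    have "real (Suc k) / 2 \<le> t k \<and> t k \<le> real (Suc k)" for k
    proof (induction k)
      case 0 then show ?case using t0 by simp
    next
      case (Suc k) then show ?case using tbd[of k] by simp
    qed
    then show ?thesis by (metis Suc_diff_1 less_eq_Suc_le One_nat_def)
  qed
  have P2: "\<forall>k\<ge>1. dual_optimal A b c (lam k)"
  proof (intro allI impI)
    fix k :: nat assume "k \<ge> 1"
    then obtain j where k: "k = Suc j" by (cases k) auto
    have val: "b \<bullet> mu = - (c \<bullet> xstar)" if "transpose A *v mu + c = 0" for mu
    proof -
      have "b \<bullet> mu = mu \<bullet> (A *v xstar)" unfolding bx by (simp add: inner_commute)
      also have "\<dots> = (transpose A *v mu) \<bullet> xstar" by (simp only: adj)
      also have "transpose A *v mu = - c" using that by (simp add: eq_neg_iff_add_eq_0 del: transpose_matrix_vector)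
      finally show ?thesis by simp
    qed
    show "dual_optimal A b c (lam k)"
      unfolding dual_optimal_def k using lamA[of j] val[of "lam (Suc j)"] val by (simp del: transpose_matrix_vector)
  qed
  have P7: "c \<noteq> 0 \<longrightarrow>
          (\<lambda>T. \<bar>c \<bullet> (xstar - x T)\<bar>) \<in> \<Theta>(\<lambda>T. 1 / real T) \<and>
          (\<lambda>T. norm (A *v x T - b)) \<in> \<Theta>(\<lambda>T. 1 / real T)"
  proof
    assume c0: "c \<noteq> 0"
    have "A *v (M *v c) \<noteq> 0"
    proof
      assume "A *v (M *v c) = 0"
      then have "transpose A *v (A *v (M *v c)) = 0" by simp
      then show False using c0 by (simp only: GMv)
    qed
    then have np: "norm (A *v (M *v c)) > 0" by simp
    have Kp: "c \<bullet> (M *v c) > 0" unfolding cMc using np by simp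
    have nn: "is_norm (norm :: real^'m \<Rightarrow> real)" unfolding is_norm_def by (simp add: norm_triangle_ineq)
    show "(\<lambda>T. \<bar>c \<bullet> (xstar - x T)\<bar>) \<in> \<Theta>(\<lambda>T. 1 / real T) \<and>
          (\<lambda>T. norm (A *v x T - b)) \<in> \<Theta>(\<lambda>T. 1 / real T)"
    proof
      show "(\<lambda>T. \<bar>c \<bullet> (xstar - x T)\<bar>) \<in> \<Theta>(\<lambda>T. 1 / real T)"
        by (rule theta_aux[OF Kp eta_pos _ P6]) (use P4 in auto)
      show "(\<lambda>T. norm (A *v x T - b)) \<in> \<Theta>(\<lambda>T. 1 / real T)"
        by (rule theta_aux[OF np eta_pos _ P6]) (use P5 nn in auto)
    qed
  qed
  show ?thesis using P1 P2 P3 P4 P5 P6 P7 by blast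
qed

end
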